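(* Let $1<p<\infty$, let $U\in B(l^p(\mathbb{N}))$ be the unilateral shift $Ue_n=e_{n+1}$ ($n\ge1$) and $B\in B(l^p(\mathbb{Z}))$ the bilateral shift $Be_n=e_{n+1}$ ($n\in\mathbb{Z}$). Then $U$ is approximately similar to $U\oplus B\oplus B\oplus\cdots$ (acting on the $l^p$-direct sum $l^p(\mathbb{N})\oplus l^p(\mathbb{Z})\oplus l^p(\mathbb{Z})\oplus\cdots$).
   Context: $(e_j)$ denotes the canonical basis. Operators $T$ on $\mathcal{Y}_1$ and $X$ on $\mathcal{Y}_2$ are approximately similar if there exist $\lambda\ge1$ and invertible $S_n:\mathcal{Y}_1\to\mathcal{Y}_2$ with $\|S_n\|\|S_n^{-1}\|\le\lambda$, $X-S_nTS_n^{-1}$ compact for all $n$, and $\|X-S_nTS_n^{-1}\|\to0$. *)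

theory Defs
  imports "HOL-Analysis.Analysis"
begin

definition lp :: "real \<Rightarrow> ('i \<Rightarrow> complex) set" where
  "lp p = {x. (\<lambda>i. cmod (x i) powr p) summable_on UNIV}"

definition lp_norm :: "real \<Rightarrow> ('i \<Rightarrow> complex) \<Rightarrow> real" where
  "lp_norm p x = (infsum (\<lambda>i. cmod (x i) powr p) UNIV) powr (1 / p)"

definition bounded_op :: "real \<Rightarrow> (('i \<Rightarrow> complex) \<Rightarrow> ('j \<Rightarrow> complex)) \<Rightarrow> bool" where
  "bounded_op p T \<longleftrightarrow>
     (\<forall>x\<in>lp p. T x \<in> lp p) \<and>
     (\<forall>x\<in>lp p. \<forall>y\<in>lp p. T (\<lambda>i. x i + y i) = (\<lambda>j. T x j + T y j)) \<and>
     (\<forall>c. \<forall>x\<in>lp p. T (\<lambda>i. c * x i) = (\<lambda>j. c * T x j)) \<and>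
     (\<exists>C. \<forall>x\<in>lp p. lp_norm p (T x) \<le> C * lp_norm p x)"

definition op_norm :: "real \<Rightarrow> (('i \<Rightarrow> complex) \<Rightarrow> ('j \<Rightarrow> complex)) \<Rightarrow> real" where
  "op_norm p T = (SUP x\<in>{x \<in> lp p. lp_norm p x \<le> 1}. lp_norm p (T x))"

definition compact_op :: "real \<Rightarrow> (('i \<Rightarrow> complex) \<Rightarrow> ('j \<Rightarrow> complex)) \<Rightarrow> bool" where
  "compact_op p T \<longleftrightarrow> bounded_op p T \<and>
     (\<forall>x :: nat \<Rightarrow> ('i \<Rightarrow> complex). (\<forall>k. x k \<in> lp p \<and> lp_norm p (x k) \<le> 1) \<longrightarrow>
        (\<exists>r y. strict_mono r \<and> y \<in> lp p \<and>
               (\<lambda>k. lp_norm p (\<lambda>j. T (x (r k)) j - y j)) \<longlonglongrightarrow> 0))"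

definition approx_similar :: "real \<Rightarrow> (('i \<Rightarrow> complex) \<Rightarrow> ('i \<Rightarrow> complex))
      \<Rightarrow> (('j \<Rightarrow> complex) \<Rightarrow> ('j \<Rightarrow> complex)) \<Rightarrow> bool" where
  "approx_similar p T X \<longleftrightarrow>
     (\<exists>lam\<ge>1. \<exists>(S :: nat \<Rightarrow> ('i \<Rightarrow> complex) \<Rightarrow> ('j \<Rightarrow> complex))
             (Sinv :: nat \<Rightarrow> ('j \<Rightarrow> complex) \<Rightarrow> ('i \<Rightarrow> complex)).
        (\<forall>n. bounded_op p (S n) \<and> bounded_op p (Sinv n) \<and>
             (\<forall>x\<in>lp p. Sinv n (S n x) = x) \<and> (\<forall>y\<in>lp p. S n (Sinv n y) = y) \<and>
             op_norm p (S n) * op_norm p (Sinv n) \<le> lam \<and>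
             compact_op p (\<lambda>y j. X y j - S n (T (Sinv n y)) j)) \<and>
        (\<lambda>n. op_norm p (\<lambda>y j. X y j - S n (T (Sinv n y)) j)) \<longlonglongrightarrow> 0)"

text \<open>Unilateral shift on l^p(N) (N indexed from 0 here): e_n |-> e_(n+1).\<close>

definition ushift :: "(nat \<Rightarrow> complex) \<Rightarrow> (nat \<Rightarrow> complex)" where
  "ushift x = (\<lambda>n. if n = 0 then 0 else x (n - 1))"

definition bshift :: "(int \<Rightarrow> complex) \<Rightarrow> (int \<Rightarrow> complex)" where
  "bshift x = (\<lambda>n. x (n - 1))"

text \<open>l^p direct sum Y_0 (+) Y_1 (+) Y_2 (+) ... with Y_0 = l^p(A), Y_k = l^p(B) (k >= 1),
  identified with l^p(A + nat * B): Inl a is coordinate a of the 0-th summand,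
  Inr (k, b) is coordinate b of the (k+1)-th summand.\<close>

definition dsum_op :: "(('a \<Rightarrow> complex) \<Rightarrow> ('a \<Rightarrow> complex))
      \<Rightarrow> (nat \<Rightarrow> ('b \<Rightarrow> complex) \<Rightarrow> ('b \<Rightarrow> complex))
      \<Rightarrow> (('a + nat \<times> 'b) \<Rightarrow> complex) \<Rightarrow> (('a + nat \<times> 'b) \<Rightarrow> complex)" where
  "dsum_op T R x = (\<lambda>i. case i of
       Inl a \<Rightarrow> T (\<lambda>a'. x (Inl a')) a
     | Inr (k, b) \<Rightarrow> R k (\<lambda>b'. x (Inr (k, b'))) b)"

end

theory Submission
  imports Defs "HOL-Library.Diagonal_Subsequence" "HOL-Library.Nat_Bijection"
begin


lemma nn_summable_bound:
  fixes f :: "'a \<Rightarrow> real"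
  assumes "\<And>x. f x \<ge> 0" "\<And>F. finite F \<Longrightarrow> sum f F \<le> B"
  shows "f summable_on UNIV" "infsum f UNIV \<le> B"
proof -
  show s: "f summable_on UNIV"
    by (rule nonneg_bdd_above_summable_on) (use assms in \<open>auto intro!: bdd_aboveI2\<close>)
  show "infsum f UNIV \<le> B" by (rule infsum_le_finite_sums[OF s]) (use assms in auto)
qed

lemma lp_fin_le:
  assumes "x \<in> lp p" "finite F"
  shows "(\<Sum>i\<in>F. cmod (x i) powr p) \<le> infsum (\<lambda>i. cmod (x i) powr p) UNIV"
  using assms unfolding lp_def by (intro finite_sum_le_infsum) auto

lemma powr_sum_le:
  fixes a b p :: real
  assumes "a \<ge> 0" "b \<ge> 0" "p \<ge> 0"
  shows "(a + b) powr p \<le> 2 powr p * (a powr p + b powr p)"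
proof -
  have "(a + b) powr p \<le> (2 * max a b) powr p" by (rule powr_mono2) (use assms in auto)
  also have "\<dots> = 2 powr p * max a b powr p" using assms by (simp add: powr_mult)
  also have "max a b powr p \<le> a powr p + b powr p" by (simp add: max_def)
  hence "2 powr p * max a b powr p \<le> 2 powr p * (a powr p + b powr p)" by simp
  finally show ?thesis .
qed

definition wc2 :: "('a \<Rightarrow> complex) \<Rightarrow> ('a \<Rightarrow> 'b) \<Rightarrow> ('a \<Rightarrow> complex) \<Rightarrow> ('a \<Rightarrow> 'b) \<Rightarrow> ('b \<Rightarrow> complex) \<Rightarrow> 'a \<Rightarrow> complex" where
  "wc2 c0 s0 c1 s1 y = (\<lambda>t. c0 t * y (s0 t) + c1 t * y (s1 t))"

lemma inj_sum_le:
  fixes s :: "'a \<Rightarrow> 'b" and c :: "'a \<Rightarrow> complex"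
  assumes inj: "inj_on s {t. c t \<noteq> 0}" and y: "y \<in> lp p" and F: "finite F"
  shows "(\<Sum>t\<in>F. (if c t = 0 then 0 else cmod (y (s t))) powr p) \<le> infsum (\<lambda>i. cmod (y i) powr p) UNIV"
proof -
  have "(\<Sum>t\<in>F. (if c t = 0 then 0 else cmod (y (s t))) powr p) = (\<Sum>t\<in>F \<inter> {t. c t \<noteq> 0}. cmod (y (s t)) powr p)"
    using F by (intro sum.mono_neutral_cong_right) auto
  also have "\<dots> = (\<Sum>i\<in>s ` (F \<inter> {t. c t \<noteq> 0}). cmod (y i) powr p)"
    by (rule sum.reindex[symmetric, unfolded o_def]) (use inj in \<open>auto intro: inj_on_subset\<close>)
  also have "\<dots> \<le> infsum (\<lambda>i. cmod (y i) powr p) UNIV"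
    using F y by (intro lp_fin_le) auto
  finally show ?thesis .
qed

lemma wc2_fin_bound:
  assumes p: "1 \<le> p" and M0: "0 \<le> M" and M: "\<And>t. cmod (c0 t) \<le> M" "\<And>t. cmod (c1 t) \<le> M"
    and inj: "inj_on s0 {t. c0 t \<noteq> 0}" "inj_on s1 {t. c1 t \<noteq> 0}"
    and y: "y \<in> lp p" and F: "finite F"
  shows "(\<Sum>t\<in>F. cmod (wc2 c0 s0 c1 s1 y t) powr p)
           \<le> 2 powr (p+1) * M powr p * infsum (\<lambda>i. cmod (y i) powr p) UNIV"
proof -
  define Y where "Y = infsum (\<lambda>i. cmod (y i) powr p) UNIV"
  define u0 where "u0 t = (if c0 t = 0 then 0 else cmod (y (s0 t)))" for t
  define u1 where "u1 t = (if c1 t = 0 then 0 else cmod (y (s1 t)))" for t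
  have u0: "u0 t \<ge> 0" "u1 t \<ge> 0" for t by (auto simp: u0_def u1_def)
  have k0: "cmod (c0 t * y (s0 t)) \<le> M * u0 t" for t
    using M(1)[of t] by (auto simp: u0_def norm_mult intro: mult_right_mono)
  have k1: "cmod (c1 t * y (s1 t)) \<le> M * u1 t" for t
    using M(2)[of t] by (auto simp: u1_def norm_mult intro: mult_right_mono)
  have pt: "cmod (wc2 c0 s0 c1 s1 y t) powr p \<le> M powr p * (2 powr p * (u0 t powr p + u1 t powr p))" for t
  proof -
    have "cmod (wc2 c0 s0 c1 s1 y t) \<le> M * (u0 t + u1 t)"
      unfolding wc2_def using norm_triangle_ineq[of "c0 t * y (s0 t)" "c1 t * y (s1 t)"] k0[of t] k1[of t]
      by (simp add: algebra_simps)
    hence "cmod (wc2 c0 s0 c1 s1 y t) powr p \<le> (M * (u0 t + u1 t)) powr p"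
      using p by (intro powr_mono2) auto
    also have "\<dots> = M powr p * (u0 t + u1 t) powr p" using M0 u0 by (simp add: powr_mult)
    also have "\<dots> \<le> M powr p * (2 powr p * (u0 t powr p + u1 t powr p))"
      using u0 p by (intro mult_left_mono powr_sum_le) auto
    finally show ?thesis .
  qed
  have "(\<Sum>t\<in>F. cmod (wc2 c0 s0 c1 s1 y t) powr p) \<le> (\<Sum>t\<in>F. M powr p * (2 powr p * (u0 t powr p + u1 t powr p)))"
    by (intro sum_mono pt)
  also have "\<dots> = M powr p * 2 powr p * ((\<Sum>t\<in>F. u0 t powr p) + (\<Sum>t\<in>F. u1 t powr p))"
    by (simp add: sum_distrib_left sum.distrib algebra_simps)
  also have "\<dots> \<le> M powr p * 2 powr p * (Y + Y)"
    using inj_sum_le[OF inj(1) y F] inj_sum_le[OF inj(2) y F]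
    by (intro mult_left_mono add_mono) (auto simp: u0_def u1_def Y_def)
  also have "\<dots> = 2 powr (p+1) * M powr p * Y" by (simp add: powr_add algebra_simps)
  finally show ?thesis by (simp add: Y_def)
qed


lemma lp_norm_nonneg: "0 \<le> lp_norm p x"
  by (simp add: lp_norm_def)

lemma zero_in_lp: "(\<lambda>_. 0) \<in> lp p"
  by (simp add: lp_def)

lemma wc2_lp:
  assumes p: "1 \<le> p" and M0: "0 \<le> M" and M: "\<And>t. cmod (c0 t) \<le> M" "\<And>t. cmod (c1 t) \<le> M"
    and inj: "inj_on s0 {t. c0 t \<noteq> 0}" "inj_on s1 {t. c1 t \<noteq> 0}"
    and y: "y \<in> lp p"
  shows "wc2 c0 s0 c1 s1 y \<in> lp p"
    "infsum (\<lambda>t. cmod (wc2 c0 s0 c1 s1 y t) powr p) UNIV \<le> 2 powr (p+1) * M powr p * infsum (\<lambda>i. cmod (y i) powr p) UNIV"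
  using nn_summable_bound[of "\<lambda>t. cmod (wc2 c0 s0 c1 s1 y t) powr p", OF _ wc2_fin_bound[OF assms]]
  by (auto simp: lp_def)

lemma wc2_norm:
  assumes p: "1 \<le> p" and M0: "0 \<le> M" and M: "\<And>t. cmod (c0 t) \<le> M" "\<And>t. cmod (c1 t) \<le> M"
    and inj: "inj_on s0 {t. c0 t \<noteq> 0}" "inj_on s1 {t. c1 t \<noteq> 0}"
    and y: "y \<in> lp p"
  shows "lp_norm p (wc2 c0 s0 c1 s1 y) \<le> 4 * M * lp_norm p y"
proof -
  define Y where "Y = infsum (\<lambda>i. cmod (y i) powr p) UNIV"
  have Y0: "Y \<ge> 0" unfolding Y_def by (intro infsum_nonneg) auto
  have "lp_norm p (wc2 c0 s0 c1 s1 y) \<le> (2 powr (p+1) * M powr p * Y) powr (1/p)"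
    unfolding lp_norm_def Y_def using p
    by (intro powr_mono2 wc2_lp[OF assms] infsum_nonneg) auto
  also have "\<dots> = (2 powr (p+1)) powr (1/p) * (M powr p) powr (1/p) * Y powr (1/p)"
    using Y0 M0 by (simp add: powr_mult)
  also have "(2 powr (p+1)) powr (1/p) = 2 powr ((p+1)/p)" by (simp add: powr_powr)
  also have "(M powr p) powr (1/p) = M" using p M0 by (simp add: powr_powr)
  also have "2 powr ((p+1)/p) \<le> 2 powr 2" using p by (intro powr_mono) (auto simp: field_simps)
  hence "2 powr ((p+1)/p) * M * Y powr (1/p) \<le> 4 * M * Y powr (1/p)"
    using M0 by (intro mult_right_mono) auto
  finally show ?thesis by (simp add: lp_norm_def Y_def)
qed

lemma wc2_bounded:
  assumes p: "1 \<le> p" and M0: "0 \<le> M" and M: "\<And>t. cmod (c0 t) \<le> M" "\<And>t. cmod (c1 t) \<le> M"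
    and inj: "inj_on s0 {t. c0 t \<noteq> 0}" "inj_on s1 {t. c1 t \<noteq> 0}"
  shows "bounded_op p (wc2 c0 s0 c1 s1)"
  unfolding bounded_op_def
proof (intro conjI ballI allI exI)
  show "wc2 c0 s0 c1 s1 x \<in> lp p" if "x \<in> lp p" for x using wc2_lp[OF assms that] by auto
  show "lp_norm p (wc2 c0 s0 c1 s1 x) \<le> (4 * M) * lp_norm p x" if "x \<in> lp p" for x
    using wc2_norm[OF assms that] by simp
qed (auto simp: wc2_def algebra_simps)

lemma op_norm_le:
  assumes "\<And>x. x \<in> lp p \<Longrightarrow> lp_norm p (T x) \<le> C * lp_norm p x" "0 \<le> C"
  shows "op_norm p T \<le> C" "0 \<le> op_norm p T"
proof -
  have ne: "(\<lambda>_. 0) \<in> {x \<in> lp p. lp_norm p x \<le> 1}" by (simp add: zero_in_lp lp_norm_def)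
  have b: "lp_norm p (T x) \<le> C" if "x \<in> {x \<in> lp p. lp_norm p x \<le> 1}" for x
  proof -
    have "lp_norm p (T x) \<le> C * lp_norm p x" using that assms by auto
    also have "\<dots> \<le> C * 1" using that assms by (intro mult_left_mono) auto
    finally show ?thesis by simp
  qed
  show "op_norm p T \<le> C" unfolding op_norm_def
    by (rule cSUP_least) (use ne b in auto)
  have "lp_norm p (T (\<lambda>_. 0)) \<le> op_norm p T" unfolding op_norm_def
    by (rule cSUP_upper[OF ne]) (use b in \<open>auto intro!: bdd_aboveI2\<close>)
  thus "0 \<le> op_norm p T" using lp_norm_nonneg order_trans by blast
qed

lemma wc2_op_norm:
  assumes p: "1 \<le> p" and M0: "0 \<le> M" and M: "\<And>t. cmod (c0 t) \<le> M" "\<And>t. cmod (c1 t) \<le> M"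
    and inj: "inj_on s0 {t. c0 t \<noteq> 0}" "inj_on s1 {t. c1 t \<noteq> 0}"
  shows "op_norm p (wc2 c0 s0 c1 s1) \<le> 4 * M" "0 \<le> op_norm p (wc2 c0 s0 c1 s1)"
  using op_norm_le[OF wc2_norm[OF assms]] M0 by auto


lemma diag_pointwise:
  fixes F :: "nat \<Rightarrow> 'a::countable \<Rightarrow> complex"
  assumes B: "\<And>k t. cmod (F k t) \<le> B"
  shows "\<exists>r. strict_mono r \<and> (\<forall>t. convergent (\<lambda>j. F (r j) t))"
proof -
  define P where "P n r \<longleftrightarrow> convergent (\<lambda>j. F (r j) (from_nat n :: 'a))" for n and r :: "nat \<Rightarrow> nat"
  interpret subseqs P
  proof
    fix n and s :: "nat \<Rightarrow> nat" assume "strict_mono s"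
    have "bounded (range (\<lambda>j. F (s j) (from_nat n :: 'a)))"
      unfolding bounded_iff using B by auto
    then obtain l r' where "strict_mono r'" "((\<lambda>j. F (s j) (from_nat n :: 'a)) \<circ> r') \<longlonglongrightarrow> l"
      using bounded_imp_convergent_subsequence by blast
    thus "\<exists>r'. strict_mono r' \<and> P n (s \<circ> r')"
      unfolding P_def by (auto simp: o_def convergent_def)
  qed
  have stable: "P n (s \<circ> r)" if "strict_mono r" "P n s" for r s n
    using convergent_subseq_convergent[OF that(2)[unfolded P_def] that(1)] by (simp add: P_def o_def)
  have "convergent (\<lambda>j. F (diagseq j) t)" for t
  proof -
    have "P (to_nat t) (diagseq \<circ> (+) (Suc (to_nat t)))"
      by (rule diagseq_holds) (use stable in blast)
    hence "convergent (\<lambda>j. F (diagseq (j + Suc (to_nat t))) t)"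
      unfolding P_def by (simp add: o_def add.commute)
    thus ?thesis using convergent_ignore_initial_segment[of "\<lambda>j. F (diagseq j) t" "Suc (to_nat t)"] by simp
  qed
  thus ?thesis using subseq_diagseq by blast
qed

lemma tendsto_powr_nn:
  fixes f :: "nat \<Rightarrow> real"
  assumes "f \<longlonglongrightarrow> l" "\<And>j. f j \<ge> 0" "p > 0"
  shows "(\<lambda>j. f j powr p) \<longlonglongrightarrow> l powr p"
proof (cases "l = 0")
  case True thus ?thesis using assms by (auto intro!: tendsto_zero_powrI)
next
  case False thus ?thesis using assms by (auto intro!: tendsto_powr)
qed


lemma powr_inv_cancel:
  fixes a p :: real assumes "0 \<le> a" "p > 0"
  shows "(a powr p) powr (1/p) = a" "(a powr (1/p)) powr p = a"
  using assms by (auto simp: powr_powr)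

lemma wc2_compact:
  fixes c0 c1 :: "'a::countable \<Rightarrow> complex" and s0 s1 :: "'a \<Rightarrow> 'b"
  assumes p: "1 \<le> p" and M0: "0 \<le> M" and M: "\<And>t. cmod (c0 t) \<le> M" "\<And>t. cmod (c1 t) \<le> M"
    and inj: "inj_on s0 {t. c0 t \<noteq> 0}" "inj_on s1 {t. c1 t \<noteq> 0}"
    and fin: "\<And>e. e > 0 \<Longrightarrow> finite {t. e \<le> cmod (c0 t) \<or> e \<le> cmod (c1 t)}"
  shows "compact_op p (wc2 c0 s0 c1 s1)"
  unfolding compact_op_def
proof (intro conjI allI impI)
  show "bounded_op p (wc2 c0 s0 c1 s1)" by (rule wc2_bounded[OF assms(1-6)])
  fix x :: "nat \<Rightarrow> 'b \<Rightarrow> complex" assume xk: "\<forall>k. x k \<in> lp p \<and> lp_norm p (x k) \<le> 1"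
  have p0: "p > 0" using p by simp
  define Y where "Y k = infsum (\<lambda>i. cmod (x k i) powr p) UNIV" for k
  have Y0: "0 \<le> Y k" for k unfolding Y_def by (intro infsum_nonneg) auto
  have Y1: "Y k \<le> 1" for k
  proof -
    have "Y k = (Y k powr (1/p)) powr p" using Y0 p0 by (simp add: powr_inv_cancel)
    also have "\<dots> \<le> 1 powr p" using xk Y0 p0 by (intro powr_mono2) (auto simp: Y_def lp_norm_def)
    finally show ?thesis by simp
  qed
  have xb: "cmod (x k i) \<le> 1" for k i
  proof -
    have "cmod (x k i) powr p \<le> Y k" using lp_fin_le[of "x k" p "{i}"] xk by (simp add: Y_def)
    hence "cmod (x k i) powr p \<le> 1" using Y1 order_trans by blast
    hence "(cmod (x k i) powr p) powr (1/p) \<le> 1 powr (1/p)" using p0 by (intro powr_mono2) auto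
    thus ?thesis using p0 by (simp add: powr_inv_cancel)
  qed
  define F where "F k = wc2 c0 s0 c1 s1 (x k)" for k
  have Fb: "cmod (F k t) \<le> 2 * M" for k t
  proof -
    have "cmod (F k t) \<le> cmod (c0 t) * cmod (x k (s0 t)) + cmod (c1 t) * cmod (x k (s1 t))"
      unfolding F_def wc2_def by (metis norm_mult norm_triangle_ineq)
    also have "\<dots> \<le> M * 1 + M * 1"
      using M xb M0 by (intro add_mono mult_mono) auto
    finally show ?thesis by simp
  qed
  obtain r where r: "strict_mono r" "\<And>t. convergent (\<lambda>j. F (r j) t)"
    using diag_pointwise[of F "2*M"] Fb by blast
  define g where "g t = lim (\<lambda>j. F (r j) t)" for t
  have gl: "(\<lambda>j. F (r j) t) \<longlonglongrightarrow> g t" for t using r(2) by (simp add: g_def convergent_LIMSEQ_iff)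
  define E where "E d = {t. d \<le> cmod (c0 t) \<or> d \<le> cmod (c1 t)}" for d
  have tail: "(\<Sum>t\<in>H. cmod (F k t) powr p) \<le> 2 powr (p+1) * d powr p"
    if d: "d > 0" and H: "finite H" "H \<inter> E d = {}" for d k H
  proof -
    define c0' where "c0' t = (if t \<in> E d then 0 else c0 t)" for t
    define c1' where "c1' t = (if t \<in> E d then 0 else c1 t)" for t
    have "(\<Sum>t\<in>H. cmod (F k t) powr p) = (\<Sum>t\<in>H. cmod (wc2 c0' s0 c1' s1 (x k) t) powr p)"
      using H by (intro sum.cong) (auto simp: F_def wc2_def c0'_def c1'_def)
    also have "\<dots> \<le> 2 powr (p+1) * d powr p * Y k" unfolding Y_def
    proof (rule wc2_fin_bound[OF p])
      show "cmod (c0' t) \<le> d" "cmod (c1' t) \<le> d" for t using d by (auto simp: c0'_def c1'_def E_def)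
      show "inj_on s0 {t. c0' t \<noteq> 0}" by (rule inj_on_subset[OF inj(1)]) (auto simp: c0'_def)
      show "inj_on s1 {t. c1' t \<noteq> 0}" by (rule inj_on_subset[OF inj(2)]) (auto simp: c1'_def)
    qed (use d H xk in auto)
    also have "\<dots> \<le> 2 powr (p+1) * d powr p * 1" using Y1 by (intro mult_left_mono) auto
    finally show ?thesis by simp
  qed
  have sumlim: "(\<lambda>j. \<Sum>t\<in>H. cmod (F (r j) t) powr p) \<longlonglongrightarrow> (\<Sum>t\<in>H. cmod (g t) powr p)" for H
    by (intro tendsto_sum tendsto_powr_nn tendsto_norm gl p0) auto
  have gtail: "(\<Sum>t\<in>H. cmod (g t) powr p) \<le> 2 powr (p+1) * d powr p"
    if "d > 0" "finite H" "H \<inter> E d = {}" for d H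
    by (rule LIMSEQ_le_const2[OF sumlim]) (use tail[OF that] in blast)
  have finE: "finite (E d)" if "d > 0" for d using fin[OF that] by (simp add: E_def)
  have glp: "g \<in> lp p"
  proof -
    have "(\<Sum>t\<in>H. cmod (g t) powr p) \<le> (\<Sum>t\<in>E 1. cmod (g t) powr p) + 2 powr (p+1) * 1 powr p"
      if H: "finite H" for H
    proof -
      have "(\<Sum>t\<in>H. cmod (g t) powr p) = (\<Sum>t\<in>H \<inter> E 1. cmod (g t) powr p) + (\<Sum>t\<in>H - E 1. cmod (g t) powr p)"
        by (rule sum.Int_Diff[OF H])
      also have "(\<Sum>t\<in>H \<inter> E 1. cmod (g t) powr p) \<le> (\<Sum>t\<in>E 1. cmod (g t) powr p)"
        using finE[of 1] by (intro sum_mono2) auto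
      also have "(\<Sum>t\<in>H - E 1. cmod (g t) powr p) \<le> 2 powr (p+1) * 1 powr p"
        using H by (intro gtail) auto
      finally show ?thesis by simp
    qed
    thus ?thesis unfolding lp_def by (intro CollectI nn_summable_bound(1)) auto
  qed
  have conv: "(\<lambda>j. infsum (\<lambda>t. cmod (F (r j) t - g t) powr p) UNIV) \<longlonglongrightarrow> 0"
  proof (rule LIMSEQ_I)
    fix e :: real assume e: "e > 0"
    define d where "d = (e / 2 powr (2*p+4)) powr (1/p)"
    have d0: "d > 0" using e by (simp add: d_def)
    have dp: "d powr p = e / 2 powr (2*p+4)" unfolding d_def using e p0 by (simp add: powr_inv_cancel)
    have "(\<lambda>j. \<Sum>t\<in>E d. cmod (F (r j) t - g t) powr p) \<longlonglongrightarrow> 0"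
    proof (rule tendsto_null_sum)
      fix t
      have "(\<lambda>j. cmod (F (r j) t - g t)) \<longlonglongrightarrow> 0"
        using gl[of t] by (simp add: tendsto_norm_zero_iff LIM_zero_iff)
      thus "(\<lambda>j. cmod (F (r j) t - g t) powr p) \<longlonglongrightarrow> 0"
        using p0 by (intro tendsto_zero_powrI) auto
    qed
    then obtain N where N: "\<And>j. j \<ge> N \<Longrightarrow> (\<Sum>t\<in>E d. cmod (F (r j) t - g t) powr p) < e/2"
      using LIMSEQ_D[of _ 0 "e/2"] e by fastforce
    show "\<exists>no. \<forall>n\<ge>no. norm (infsum (\<lambda>t. cmod (F (r n) t - g t) powr p) UNIV - 0) < e"
    proof (intro exI allI impI)
      fix j assume j: "j \<ge> N"
      have bnd: "(\<Sum>t\<in>H. cmod (F (r j) t - g t) powr p) \<le> e/2 + e/4" if H: "finite H" for H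
      proof -
        have "(\<Sum>t\<in>H. cmod (F (r j) t - g t) powr p) = (\<Sum>t\<in>H \<inter> E d. cmod (F (r j) t - g t) powr p) + (\<Sum>t\<in>H - E d. cmod (F (r j) t - g t) powr p)"
          by (rule sum.Int_Diff[OF H])
        also have "(\<Sum>t\<in>H \<inter> E d. cmod (F (r j) t - g t) powr p) \<le> (\<Sum>t\<in>E d. cmod (F (r j) t - g t) powr p)"
          using finE[OF d0] by (intro sum_mono2) auto
        also have "\<dots> \<le> e/2" using N[OF j] by simp
        also have "(\<Sum>t\<in>H - E d. cmod (F (r j) t - g t) powr p) \<le> (\<Sum>t\<in>H - E d. 2 powr p * (cmod (F (r j) t) powr p + cmod (g t) powr p))"
        proof (rule sum_mono)
          fix t
          have "cmod (F (r j) t - g t) powr p \<le> (cmod (F (r j) t) + cmod (g t)) powr p"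
            using p0 by (intro powr_mono2 norm_triangle_ineq4) auto
          also have "\<dots> \<le> 2 powr p * (cmod (F (r j) t) powr p + cmod (g t) powr p)"
            using p0 by (intro powr_sum_le) auto
          finally show "cmod (F (r j) t - g t) powr p \<le> 2 powr p * (cmod (F (r j) t) powr p + cmod (g t) powr p)" .
        qed
        also have "\<dots> = 2 powr p * ((\<Sum>t\<in>H - E d. cmod (F (r j) t) powr p) + (\<Sum>t\<in>H - E d. cmod (g t) powr p))"
          by (simp add: sum_distrib_left[symmetric] sum.distrib)
        also have "\<dots> \<le> 2 powr p * (2 powr (p+1) * d powr p + 2 powr (p+1) * d powr p)"
          using H d0 by (intro mult_left_mono add_mono tail gtail) auto
        also have "\<dots> = e / 4"
        proof -
          have q1: "2 powr (p+1) = 2 * 2 powr p" by (simp add: powr_add)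
          have q2: "2 powr (2*p+4) = 16 * (2 powr p * 2 powr p)"
            by (simp add: powr_add[symmetric] mult_2 algebra_simps) (simp add: powr_add)
          show ?thesis unfolding dp q1 q2 by (simp add: field_simps)
        qed
        finally show ?thesis by simp
      qed
      have "infsum (\<lambda>t. cmod (F (r j) t - g t) powr p) UNIV \<le> e/2 + e/4"
        by (rule nn_summable_bound(2)) (use bnd in auto)
      moreover have "infsum (\<lambda>t. cmod (F (r j) t - g t) powr p) UNIV \<ge> 0" by (intro infsum_nonneg) auto
      ultimately show "norm (infsum (\<lambda>t. cmod (F (r j) t - g t) powr p) UNIV - 0) < e" using e by simp
    qed
  qed
  have "(\<lambda>k. lp_norm p (\<lambda>j. wc2 c0 s0 c1 s1 (x (r k)) j - g j)) \<longlonglongrightarrow> 0"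
    unfolding lp_norm_def F_def[symmetric]
    by (rule tendsto_zero_powrI[OF conv tendsto_const[of "1/p"]]) (use p0 in \<open>auto intro!: infsum_nonneg always_eventually\<close>)
  thus "\<exists>r y. strict_mono r \<and> y \<in> lp p \<and> (\<lambda>k. lp_norm p (\<lambda>j. wc2 c0 s0 c1 s1 (x (r k)) j - y j)) \<longlonglongrightarrow> 0"
    using r(1) glp by blast
qed




definition len :: "nat \<Rightarrow> nat \<Rightarrow> nat" where "len L t = Suc (L + t)"
definition st :: "nat \<Rightarrow> nat \<Rightarrow> nat" where "st L t = (\<Sum>s<t. 4 * len L s)"
definition pos :: "nat \<Rightarrow> nat \<Rightarrow> nat \<Rightarrow> nat \<Rightarrow> nat" where
  "pos L t q j = Suc (st L t + q * len L t + j)"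

lemma st_Suc: "st L (Suc t) = st L t + 4 * len L t" by (simp add: st_def)

lemma st_mono: "t < t' \<Longrightarrow> st L t + 4 * len L t \<le> st L t'"
proof (induction t' arbitrary: t)
  case 0 thus ?case by simp
next
  case (Suc t')
  show ?case
  proof (cases "t = t'")
    case True thus ?thesis by (simp add: st_Suc)
  next
    case False
    hence "st L t + 4 * len L t \<le> st L t'" using Suc by simp
    thus ?thesis by (simp add: st_Suc)
  qed
qed

lemma st_mono': "t \<le> t' \<Longrightarrow> st L t \<le> st L t'"
  using st_mono[of t t' L] by (cases "t = t'") auto

lemma divmod_unique:
  fixes l :: nat
  assumes "o1 < l" "o2 < l" "q1 * l + o1 = q2 * l + o2"
  shows "q1 = q2 \<and> o1 = o2"
proof -
  have l: "l \<noteq> 0" using assms by auto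
  have e1: "(o1 + q1 * l) div l = q1" using assms div_mult_self1[OF l, of o1 q1] by simp
  have e2: "(o2 + q2 * l) div l = q2" using assms div_mult_self1[OF l, of o2 q2] by simp
  have "o1 + q1 * l = o2 + q2 * l" using assms(3) by simp
  hence "q1 = q2" using e1 e2 by metis
  with assms show ?thesis by auto
qed

lemma pos_inj:
  assumes "q < 4" "j < len L t" "q' < 4" "j' < len L t'" "pos L t q j = pos L t' q' j'"
  shows "t = t' \<and> q = q' \<and> j = j'"
proof -
  have tt: "t = t'"
  proof (rule ccontr)
    assume "t \<noteq> t'"
    then consider "t < t'" | "t' < t" by linarith
    thus False
    proof cases
      case 1
      have "q * len L t + j < 4 * len L t"
      proof -
        have "q * len L t + j < q * len L t + len L t" using assms by simp
        also have "\<dots> = Suc q * len L t" by simp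
        also have "\<dots> \<le> 4 * len L t" using assms(1) by (intro mult_right_mono) auto
        finally show ?thesis .
      qed
      thus False using st_mono[OF 1, of L] assms(5) by (simp add: pos_def)
    next
      case 2
      have "q' * len L t' + j' < 4 * len L t'"
      proof -
        have "q' * len L t' + j' < q' * len L t' + len L t'" using assms by simp
        also have "\<dots> = Suc q' * len L t'" by simp
        also have "\<dots> \<le> 4 * len L t'" using assms(3) by (intro mult_right_mono) auto
        finally show ?thesis .
      qed
      thus False using st_mono[OF 2, of L] assms(5) by (simp add: pos_def)
    qed
  qed
  thus ?thesis using assms divmod_unique[of j "len L t" j' q q'] by (simp add: pos_def)
qed

lemma st_ge: "t \<le> st L t"
proof (induction t)
  case (Suc t) thus ?case by (simp add: st_Suc len_def)
qed simp

lemma pos_exists: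
  assumes "i \<ge> 1"
  shows "\<exists>t q j. q < 4 \<and> j < len L t \<and> i = pos L t q j"
proof -
  define u where "u = i - 1"
  have ex: "\<exists>t. u < st L (Suc t)" using st_ge[of "Suc u" L] by (intro exI[of _ u]) simp
  define t where "t = (LEAST t. u < st L (Suc t))"
  have t1: "u < st L (Suc t)" unfolding t_def by (rule LeastI_ex[OF ex])
  have t0: "st L t \<le> u"
  proof (cases t)
    case 0 thus ?thesis by (simp add: st_def)
  next
    case (Suc t')
    have "\<not> u < st L (Suc t')" using not_less_Least[of t' "\<lambda>t. u < st L (Suc t)"] Suc t_def by auto
    thus ?thesis using Suc by simp
  qed
  define v where "v = u - st L t"
  have lpos: "len L t > 0" using assms by (simp add: len_def)
  have v4: "v < 4 * len L t" using t0 t1 by (simp add: v_def st_Suc)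
  define q where "q = v div len L t"
  define j where "j = v mod len L t"
  have "q < 4" using v4 lpos by (simp add: q_def less_mult_imp_div_less)
  moreover have "j < len L t" using lpos by (simp add: j_def)
  moreover have "i = pos L t q j"
  proof -
    have "v div len L t * len L t + v mod len L t = v" by (rule div_mult_mod_eq)
    thus ?thesis using assms t0 by (simp add: pos_def q_def j_def u_def v_def add.assoc)
  qed
  ultimately show ?thesis by blast
qed

definition dec :: "nat \<Rightarrow> nat \<Rightarrow> nat \<times> nat \<times> nat" where
  "dec L i = (THE (t, q, j). q < 4 \<and> j < len L t \<and> i = pos L t q j)"

lemma dec_pos:
  assumes "q < 4" "j < len L t"
  shows "dec L (pos L t q j) = (t, q, j)"
  unfolding dec_def
proof (rule the_equality)
  show "case (t, q, j) of (t', q', j') \<Rightarrow> q' < 4 \<and> j' < len L t' \<and> pos L t q j = pos L t' q' j'"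
    using assms by simp
  fix x assume "case x of (t', q', j') \<Rightarrow> q' < 4 \<and> j' < len L t' \<and> pos L t q j = pos L t' q' j'"
  thus "x = (t, q, j)" using pos_inj[OF assms] by (cases x) auto
qed


abbreviation T :: "nat \<Rightarrow> nat \<Rightarrow> nat" where "T k m \<equiv> prod_encode (k, m)"

lemma T_Suc: "T k (Suc m) = T k m + Suc (k + m)"
  by (simp add: prod_encode_def)

lemma T_less: "T k m < T k (Suc m)" by (simp add: T_Suc)

lemma triangle_ge: "n \<le> triangle n"
  by (induction n) auto

lemma T_Suc_le: "T k (Suc m) \<le> 2 * T k m + 1"
  using triangle_ge[of "k+m"] by (simp add: prod_encode_def)

lemma T_surj: "\<exists>k m. t = T k m"
  by (metis prod_decode_inverse surj_pair)

definition sd :: "nat \<Rightarrow> nat \<Rightarrow> (nat \<times> nat \<times> nat) option" where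
  "sd L i = (if i = 0 then None else (case dec L i of (t, q, j) \<Rightarrow>
     (case prod_decode t of (k, m) \<Rightarrow>
       if q = 0 then Some (len L t, Suc j, pos L t 3 j)
       else if q = 3 then Some (len L t, Suc j, pos L t 0 j)
       else if q = 1 then Some (len L t, Suc j, pos L (T k (Suc m)) 2 (T k (Suc m) - t + j))
       else if m = 0 then None
       else if t - T k (m - 1) \<le> j then
         Some (len L (T k (m - 1)), Suc (j - (t - T k (m - 1))), pos L (T k (m - 1)) 1 (j - (t - T k (m - 1))))
       else None)))"

lemma pos_nz [simp]: "pos L t q j \<noteq> 0" by (simp add: pos_def)
lemma pos_ge [simp]: "Suc 0 \<le> pos L t q j" by (simp add: pos_def)

lemma sd_R: "j < len L t \<Longrightarrow> sd L (pos L t 0 j) = Some (len L t, Suc j, pos L t 3 j)"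
  by (simp add: sd_def dec_pos split: prod.split)

lemma sd_C: "j < len L t \<Longrightarrow> sd L (pos L t 3 j) = Some (len L t, Suc j, pos L t 0 j)"
  by (simp add: sd_def dec_pos split: prod.split)

lemma sd_A: "j < len L (T k m) \<Longrightarrow>
   sd L (pos L (T k m) 1 j) = Some (len L (T k m), Suc j, pos L (T k (Suc m)) 2 (T k (Suc m) - T k m + j))"
  by (simp add: sd_def dec_pos)

lemma sd_B0: "j < len L (T k 0) \<Longrightarrow> sd L (pos L (T k 0) 2 j) = None"
  by (simp add: sd_def dec_pos)

lemma sd_B: "j < len L (T k (Suc m)) \<Longrightarrow>
   sd L (pos L (T k (Suc m)) 2 j) = (if T k (Suc m) - T k m \<le> j then
      Some (len L (T k m), Suc (j - (T k (Suc m) - T k m)), pos L (T k m) 1 (j - (T k (Suc m) - T k m)))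
    else None)"
  by (simp add: sd_def dec_pos del: prod_encode_eq)

lemma sd_0 [simp]: "sd L 0 = None" by (simp add: sd_def)

lemma cases_pos:
  assumes "i \<ge> 1"
  obtains k m q j where "q < 4" "j < len L (T k m)" "i = pos L (T k m) q j"
  using pos_exists[OF assms, of L] T_surj by metis


definition settled :: "nat \<Rightarrow> nat \<Rightarrow> bool" where
  "settled L i \<longleftrightarrow> sd L i = None \<or> (\<exists>w j. sd L i = Some (w, w, j))"

lemma len_pos: "len L t > 0" by (simp add: len_def)

lemma pos_pred1: "j \<ge> 1 \<Longrightarrow> pos L t q j - 1 = pos L t q (j - 1)"
  by (simp add: pos_def)

lemma pos_pred2: "q \<ge> 1 \<Longrightarrow> pos L t q 0 - 1 = pos L t (q - 1) (len L t - 1)"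
  by (cases q) (auto simp: pos_def len_def algebra_simps)

lemma pos_pred3: "pos L (Suc t) 0 0 - 1 = pos L t 3 (len L t - 1)"
  by (simp add: pos_def st_Suc len_def)

lemma pos_000: "pos L 0 0 0 = 1" by (simp add: pos_def st_def)

lemma end_settled:
  assumes "q < 4"
  shows "settled L (pos L t q (len L t - 1))"
proof -
  have lt: "len L t - 1 < len L t" using len_pos[of L t] by simp
  have "q = 0 \<or> q = 1 \<or> q = 2 \<or> q = 3" using assms by auto
  moreover
  { assume "q = 0" hence ?thesis using sd_R[OF lt] len_pos[of L t] by (simp add: settled_def) }
  moreover
  { assume "q = 3" hence ?thesis using sd_C[OF lt] len_pos[of L t] by (simp add: settled_def) }
  moreover
  { assume q1: "q = 1"
    obtain k m where t: "t = T k m" using T_surj by blast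
    have ?thesis using q1 sd_A[of "len L t - 1" L k m] lt len_pos[of L t] t by (simp add: settled_def) }
  moreover
  { assume q2: "q = 2"
    obtain k m where t: "t = T k m" using T_surj by blast
    have ?thesis
    proof (cases m)
      case 0 thus ?thesis using q2 t sd_B0[of "len L t - 1" L k] lt by (simp add: settled_def)
    next
      case (Suc m')
      have d: "T k (Suc m') - T k m' \<le> len L t - 1" using t Suc by (simp add: len_def)
      have e: "Suc (len L t - 1 - (T k (Suc m') - T k m')) = len L (T k m')"
        using t Suc T_less[of k m'] by (simp add: len_def)
      show ?thesis using q2 t Suc sd_B[of "len L t - 1" L k m'] lt d e by (simp add: settled_def)
    qed }
  ultimately show ?thesis by blast
qed

lemma settled_pred0:
  assumes "q < 4"
  shows "settled L (pos L t q 0 - 1)"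
proof (cases "q \<ge> 1")
  case True thus ?thesis using pos_pred2[OF True] end_settled[of "q - 1"] assms by simp
next
  case False
  hence q: "q = 0" by simp
  show ?thesis
  proof (cases t)
    case 0 thus ?thesis using q pos_000[of L] by (simp add: settled_def)
  next
    case (Suc t') thus ?thesis using q pos_pred3[of L t'] end_settled[of 3] by simp
  qed
qed

lemma sd_sym:
  assumes "sd L i = Some (w, s, j)"
  shows "sd L j = Some (w, s, i) \<and> 1 \<le> s \<and> s \<le> w \<and> L < w \<and> j \<ge> 1"
proof -
  have "i \<ge> 1" using assms by (cases i) auto
  then obtain k m q jj where q: "q < 4" and jj: "jj < len L (T k m)" and i: "i = pos L (T k m) q jj"
    by (rule cases_pos)
  have "q = 0 \<or> q = 1 \<or> q = 2 \<or> q = 3" using q by auto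
  moreover
  { assume "q = 0" hence ?thesis using assms i jj sd_C[OF jj] sd_R[OF jj] by (auto simp: len_def) }
  moreover
  { assume "q = 3" hence ?thesis using assms i jj sd_C[OF jj] sd_R[OF jj] by (auto simp: len_def) }
  moreover
  { assume q1: "q = 1"
    have lt: "T k (Suc m) - T k m + jj < len L (T k (Suc m))"
      using jj T_less[of k m] by (simp add: len_def)
    have ?thesis using assms i q1 sd_A[OF jj] sd_B[OF lt] jj T_less[of k m] by (auto simp: len_def) }
  moreover
  { assume q2: "q = 2"
    have ?thesis
    proof (cases m)
      case 0 thus ?thesis using assms i q2 sd_B0 jj by simp
    next
      case (Suc m')
      define d where "d = T k (Suc m') - T k m'"
      have dj: "d \<le> jj" using assms i q2 Suc sd_B jj by (fastforce simp: d_def split: if_splits)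
      have lt: "jj - d < len L (T k m')" using jj Suc T_less[of k m'] by (simp add: len_def d_def)
      have e: "d + (jj - d) = jj" using dj by simp
      show ?thesis using assms i q2 Suc sd_B[of jj L k m'] jj dj sd_A[OF lt] e lt
        by (auto simp: d_def len_def)
    qed }
  ultimately show ?thesis by blast
qed


lemma sd_step:
  assumes "i \<ge> 1"
  shows "(sd L i = None \<and> settled L (i - 1))
       \<or> (\<exists>w j. sd L i = Some (w, 1, j) \<and> settled L (i - 1) \<and> settled L (j - 1))
       \<or> (\<exists>w s j. s \<ge> 2 \<and> sd L i = Some (w, s, j) \<and> sd L (i - 1) = Some (w, s - 1, j - 1))"
proof -
  obtain k m q jj where q: "q < 4" and jj: "jj < len L (T k m)" and i: "i = pos L (T k m) q jj"
    using cases_pos[OF assms] by blast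
  define t where "t = T k m"
  have qc: "q = 0 \<or> q = 1 \<or> q = 2 \<or> q = 3" using q by auto
  show ?thesis
  proof (cases "jj = 0")
    case True
    have si: "settled L (i - 1)" using settled_pred0[OF q] i True by simp
    moreover
    { assume "q = 0" hence ?thesis using si i True sd_R[OF jj] settled_pred0[of 3 L "T k m"] by simp }
    moreover
    { assume "q = 3" hence ?thesis using si i True sd_C[OF jj] settled_pred0[of 0 L "T k m"] by simp }
    moreover
    { assume q1: "q = 1"
      define d where "d = T k (Suc m) - T k m"
      have d1: "d \<ge> 1" using T_less[of k m] by (simp add: d_def)
      have lt: "d - 1 < len L (T k (Suc m))" using T_less[of k m] by (simp add: d_def len_def)
      have "sd L (pos L (T k (Suc m)) 2 (d - 1)) = None" using sd_B[OF lt] d1 by (simp add: d_def)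
      hence "settled L (pos L (T k (Suc m)) 2 d - 1)" using pos_pred1[OF d1] by (simp add: settled_def)
      hence ?thesis using si i True q1 sd_A[OF jj] by (simp add: d_def) }
    moreover
    { assume q2: "q = 2"
      have "sd L i = None"
      proof (cases m)
        case 0 thus ?thesis using q2 i sd_B0 jj by simp
      next
        case (Suc m') thus ?thesis using q2 i True sd_B[of 0 L k m'] T_less[of k m'] jj by simp
      qed
      hence ?thesis using si by simp }
    ultimately show ?thesis using qc by blast
  next
    case False
    hence j1: "jj \<ge> 1" by simp
    have im: "i - 1 = pos L (T k m) q (jj - 1)" using i pos_pred1[OF j1] by simp
    have jl: "jj - 1 < len L (T k m)" using jj by simp
    { assume "q = 0" hence ?thesis using i im sd_R[OF jj] sd_R[OF jl] pos_pred1[OF j1] j1 by simp }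
    moreover
    { assume "q = 3" hence ?thesis using i im sd_C[OF jj] sd_C[OF jl] pos_pred1[OF j1] j1 by simp }
    moreover
    { assume q1: "q = 1"
      have "pos L (T k (Suc m)) 2 (T k (Suc m) - T k m + jj) - 1 = pos L (T k (Suc m)) 2 (T k (Suc m) - T k m + (jj - 1))"
        using j1 by (simp add: pos_def)
      hence ?thesis using i im q1 sd_A[OF jj] sd_A[OF jl] j1 by simp }
    moreover
    { assume q2: "q = 2"
      have ?thesis
      proof (cases m)
        case 0 thus ?thesis using q2 i im sd_B0 jj jl by (simp add: settled_def)
      next
        case (Suc m')
        define d where "d = T k (Suc m') - T k m'"
        have si: "sd L i = (if d \<le> jj then Some (len L (T k m'), Suc (jj - d), pos L (T k m') 1 (jj - d)) else None)"
          using i q2 Suc sd_B[of jj L k m'] jj by (simp add: d_def)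
        have sim: "sd L (i - 1) = (if d \<le> jj - 1 then Some (len L (T k m'), Suc (jj - 1 - d), pos L (T k m') 1 (jj - 1 - d)) else None)"
          using im q2 Suc sd_B[of "jj - 1" L k m'] jl by (simp add: d_def)
        consider "jj < d" | "jj = d" | "jj > d" by linarith
        thus ?thesis
        proof cases
          case 1
          hence "\<not> d \<le> jj - 1" by simp
          thus ?thesis using si sim 1 by (simp add: settled_def)
        next
          case 2
          have "pos L (T k m') 1 0 - 1 = pos L (T k m') 0 (len L (T k m') - 1)" using pos_pred2[of 1 L "T k m'"] by simp
          hence "settled L (pos L (T k m') 1 0 - 1)" using end_settled[of 0] by simp
          moreover have "\<not> d \<le> d - 1" using 2 j1 by simp
          ultimately show ?thesis using si sim 2 j1 by (simp add: settled_def)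
        next
          case 3
          have "pos L (T k m') 1 (jj - d) - 1 = pos L (T k m') 1 (jj - 1 - d)" using 3 by (simp add: pos_def)
          moreover have "Suc (jj - 1 - d) = Suc (jj - d) - 1" using 3 by simp
          ultimately show ?thesis using si sim 3 by auto
        qed
      qed }
    ultimately show ?thesis using qc by blast
  qed
qed




definition zz :: "nat \<Rightarrow> nat \<Rightarrow> complex" where
  "zz L i = (case sd L i of None \<Rightarrow> 1 | Some (w, s, j) \<Rightarrow> cis (pi * real s / real w))"
definition ptn :: "nat \<Rightarrow> nat \<Rightarrow> nat" where
  "ptn L i = (case sd L i of None \<Rightarrow> i | Some (w, s, j) \<Rightarrow> j)"
definition tau :: "nat \<Rightarrow> nat \<Rightarrow> nat" where
  "tau L i = (case sd L i of None \<Rightarrow> i | Some (w, s, j) \<Rightarrow> if s = w then j else i)"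
definition cc :: "nat \<Rightarrow> nat \<Rightarrow> complex" where
  "cc L i = (case sd L i of None \<Rightarrow> 0 | Some (w, s, j) \<Rightarrow> (1 - cis (pi / real w)) / 2)"
definition ca :: "complex \<Rightarrow> complex" where "ca z = (1 + z) / 2"
definition cb :: "complex \<Rightarrow> complex" where "cb z = (1 - z) / 2"

definition Rop :: "nat \<Rightarrow> (nat \<Rightarrow> complex) \<Rightarrow> nat \<Rightarrow> complex" where
  "Rop L x i = ca (zz L i) * x i + cb (zz L i) * x (ptn L i)"
definition Rinv :: "nat \<Rightarrow> (nat \<Rightarrow> complex) \<Rightarrow> nat \<Rightarrow> complex" where
  "Rinv L x i = ca (cnj (zz L i)) * x i + cb (cnj (zz L i)) * x (ptn L i)"

lemma ptn_ptn [simp]: "ptn L (ptn L i) = i"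
  by (cases "sd L i") (auto simp: ptn_def dest: sd_sym)

lemma zz_ptn [simp]: "zz L (ptn L i) = zz L i"
  by (cases "sd L i") (auto simp: ptn_def zz_def dest: sd_sym)

lemma norm_zz [simp]: "cmod (zz L i) = 1"
  by (cases "sd L i") (auto simp: zz_def)

lemma cnj_zz: "cnj (zz L i) * zz L i = 1"
proof -
  have "zz L i * cnj (zz L i) = complex_of_real ((cmod (zz L i))\<^sup>2)" by (rule complex_norm_square[symmetric])
  thus ?thesis by (simp add: mult.commute)
qed

lemma zz_cnj: "zz L i * cnj (zz L i) = 1"
  using cnj_zz[of L i] by (simp add: mult.commute)

lemma ptn_0 [simp]: "ptn L 0 = 0" by (simp add: ptn_def)
lemma zz_0 [simp]: "zz L 0 = 1" by (simp add: zz_def)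
lemma cc_0 [simp]: "cc L 0 = 0" by (simp add: cc_def)

lemma ptn_ge1: "i \<ge> 1 \<Longrightarrow> ptn L i \<ge> 1"
  by (cases "sd L i") (auto simp: ptn_def dest: sd_sym)

lemma M_mult: "ca z * (ca u * X + cb u * Y) + cb z * (ca u * Y + cb u * X) = ca (z * u) * X + cb (z * u) * Y"
  by (simp add: ca_def cb_def field_simps)

lemma M_one: "ca z * X + cb z * Y = X - cb z * (X - Y)"
  by (simp add: ca_def cb_def field_simps)

lemma ca_1 [simp]: "ca 1 = 1" and cb_1 [simp]: "cb 1 = 0" by (simp_all add: ca_def cb_def)

lemma Rinv_Rop: "Rinv L (Rop L x) = x"
proof
  fix i
  have "Rinv L (Rop L x) i = ca (cnj (zz L i) * zz L i) * x i + cb (cnj (zz L i) * zz L i) * x (ptn L i)"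
    unfolding Rinv_def Rop_def by (simp add: M_mult)
  thus "Rinv L (Rop L x) i = x i" by (simp add: cnj_zz)
qed

lemma Rop_Rinv: "Rop L (Rinv L x) = x"
proof
  fix i
  have "Rop L (Rinv L x) i = ca (zz L i * cnj (zz L i)) * x i + cb (zz L i * cnj (zz L i)) * x (ptn L i)"
    unfolding Rinv_def Rop_def by (simp add: M_mult)
  thus "Rop L (Rinv L x) i = x i" by (simp add: zz_cnj)
qed

lemma settled_Rinv:
  assumes "settled L j"
  shows "Rinv L x j = x (tau L j)"
  using assms
proof (cases "sd L j")
  case None thus ?thesis by (simp add: Rinv_def zz_def ptn_def tau_def)
next
  case (Some a)
  then obtain w j' where a: "sd L j = Some (w, w, j')" using assms by (auto simp: settled_def)
  have "w \<ge> 1" using sd_sym[OF a] by simp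
  hence "zz L j = -1" using a by (simp add: zz_def)
  thus ?thesis using a by (simp add: Rinv_def ca_def cb_def ptn_def tau_def)
qed

lemma key_step:
  assumes i: "i \<ge> 1"
  shows "Rop L (ushift (Rinv L x)) i = x (tau L (i - 1)) - cc L i * (x (tau L (i - 1)) - x (tau L (ptn L i - 1)))"
proof -
  have pi1: "ptn L i \<ge> 1" by (rule ptn_ge1[OF i])
  have base: "Rop L (ushift (Rinv L x)) i = ca (zz L i) * Rinv L x (i - 1) + cb (zz L i) * Rinv L x (ptn L i - 1)"
    using i pi1 by (simp add: Rop_def ushift_def)
  from sd_step[OF i, of L] consider
      (reg) "sd L i = None" "settled L (i - 1)"
    | (one) w j where "sd L i = Some (w, 1, j)" "settled L (i - 1)" "settled L (j - 1)"
    | (mid) w s j where "s \<ge> 2" "sd L i = Some (w, s, j)" "sd L (i - 1) = Some (w, s - 1, j - 1)"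
    by (elim disjE exE conjE) auto
  thus ?thesis
  proof cases
    case reg
    thus ?thesis using base settled_Rinv[OF reg(2)] by (simp add: zz_def ptn_def cc_def)
  next
    case one
    have e: "zz L i = cis (pi / real w)" "ptn L i = j" "cc L i = cb (cis (pi / real w))"
      using one by (simp_all add: zz_def ptn_def cc_def cb_def)
    have "Rop L (ushift (Rinv L x)) i = ca (cis (pi / real w)) * x (tau L (i - 1)) + cb (cis (pi / real w)) * x (tau L (j - 1))"
      using base settled_Rinv[OF one(2)] settled_Rinv[OF one(3)] e by simp
    thus ?thesis unfolding e M_one by simp
  next
    case mid
    have sw: "s \<le> w" "1 \<le> s" "L < w" using sd_sym[OF mid(2)] by auto
    have s2: "sd L (j - 1) = Some (w, s - 1, i - 1)" using sd_sym[OF mid(3)] by simp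
    define z' where "z' = cis (pi * real (s - 1) / real w)"
    have t1: "tau L (i - 1) = i - 1" "tau L (j - 1) = j - 1" using mid(3) s2 sw mid(1) by (auto simp: tau_def)
    have r1: "Rinv L x (i - 1) = ca (cnj z') * x (i - 1) + cb (cnj z') * x (j - 1)"
      using mid(3) by (simp add: Rinv_def zz_def ptn_def z'_def)
    have r2: "Rinv L x (j - 1) = ca (cnj z') * x (j - 1) + cb (cnj z') * x (i - 1)"
      using s2 by (simp add: Rinv_def zz_def ptn_def z'_def)
    have zi: "zz L i = cis (pi * real s / real w)" "ptn L i = j" "cc L i = (1 - cis (pi / real w)) / 2"
      using mid by (simp_all add: zz_def ptn_def cc_def)
    have om: "cis (pi * real s / real w) * cnj z' = cis (pi / real w)"
    proof -
      have "cis (pi * real s / real w) * cnj z' = cis (pi * real s / real w - pi * real (s - 1) / real w)"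
        by (simp add: z'_def cis_cnj cis_mult)
      also have "pi * real s / real w - pi * real (s - 1) / real w = pi / real w"
        using sw by (simp add: of_nat_diff field_simps)
      finally show ?thesis .
    qed
    have "Rop L (ushift (Rinv L x)) i = ca (zz L i * cnj z') * x (i - 1) + cb (zz L i * cnj z') * x (j - 1)"
      unfolding base r1 zi(2) r2 by (rule M_mult)
    also have "\<dots> = ca (cis (pi / real w)) * x (i - 1) + cb (cis (pi / real w)) * x (j - 1)"
      using om zi by simp
    finally show ?thesis using zi t1 unfolding M_one by (simp add: cb_def)
  qed
qed




lemma tau_tau [simp]: "tau L (tau L i) = i"
proof (cases "sd L i")
  case None thus ?thesis by (simp add: tau_def)
next
  case (Some a)
  then obtain w s j where a: "sd L i = Some (w, s, j)" by (metis prod_cases3)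
  show ?thesis using a sd_sym[OF a] by (auto simp: tau_def)
qed

lemma tau_0 [simp]: "tau L 0 = 0" by (simp add: tau_def)

definition rho :: "nat \<Rightarrow> nat \<Rightarrow> nat" where "rho L t = (\<Sum>s<t. len L s)"
definition Lam :: "nat \<Rightarrow> nat \<Rightarrow> nat \<Rightarrow> nat" where "Lam L k m = (\<Sum>m'<m. len L (T k m'))"

definition phi :: "nat \<Rightarrow> nat \<Rightarrow> nat + nat \<times> int" where
  "phi L i = (if i = 0 then Inl 0 else case dec L i of (t, q, j) \<Rightarrow> case prod_decode t of (k, m) \<Rightarrow>
     if q = 0 then Inl (Suc (rho L t + j))
     else if q = 1 then Inr (k, int (2 * Lam L k m + len L t + j))
     else if q = 2 then Inr (k, int j - int (Lam L k m + len L t))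
     else Inr (k, int (2 * Lam L k m + j)))"

lemma phi_R: "j < len L t \<Longrightarrow> phi L (pos L t 0 j) = Inl (Suc (rho L t + j))"
  by (simp add: phi_def dec_pos split: prod.split)
lemma phi_A: "j < len L (T k m) \<Longrightarrow> phi L (pos L (T k m) 1 j) = Inr (k, int (2 * Lam L k m + len L (T k m) + j))"
  by (simp add: phi_def dec_pos)
lemma phi_B: "j < len L (T k m) \<Longrightarrow> phi L (pos L (T k m) 2 j) = Inr (k, int j - int (Lam L k m + len L (T k m)))"
  by (simp add: phi_def dec_pos)
lemma phi_C: "j < len L (T k m) \<Longrightarrow> phi L (pos L (T k m) 3 j) = Inr (k, int (2 * Lam L k m + j))"
  by (simp add: phi_def dec_pos)
lemma phi_0 [simp]: "phi L 0 = Inl 0" by (simp add: phi_def)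

definition sX :: "nat + nat \<times> int \<Rightarrow> nat + nat \<times> int" where
  "sX y = (case y of Inl a \<Rightarrow> Inl (Suc a) | Inr (k, b) \<Rightarrow> Inr (k, b + 1))"
definition pX :: "nat + nat \<times> int \<Rightarrow> nat + nat \<times> int" where
  "pX y = (case y of Inl a \<Rightarrow> Inl (a - 1) | Inr (k, b) \<Rightarrow> Inr (k, b - 1))"

lemma pX_sX [simp]: "pX (sX y) = y" by (auto simp: pX_def sX_def split: sum.split)

definition ff :: "nat \<Rightarrow> nat \<Rightarrow> nat" where "ff L i = Suc (tau L i)"
definition gg :: "nat \<Rightarrow> nat \<Rightarrow> nat" where "gg L i = tau L (i - 1)"

lemma gg_ff [simp]: "gg L (ff L i) = i" by (simp add: ff_def gg_def)
lemma ff_gg: "i \<ge> 1 \<Longrightarrow> ff L (gg L i) = i" by (simp add: ff_def gg_def)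

lemma pos_suc1: "Suc (pos L t q j) = pos L t q (Suc j)" by (simp add: pos_def)
lemma pos_suc2: "q < 3 \<Longrightarrow> Suc (pos L t q (len L t - 1)) = pos L t (Suc q) 0"
  by (simp add: pos_def len_def algebra_simps)
lemma pos_suc3: "Suc (pos L t 3 (len L t - 1)) = pos L (Suc t) 0 0"
  by (simp add: pos_def len_def st_Suc algebra_simps)

lemma rho_Suc: "rho L (Suc t) = rho L t + len L t" by (simp add: rho_def)
lemma Lam_Suc: "Lam L k (Suc m) = Lam L k m + len L (T k m)" by (simp add: Lam_def)
lemma Lam_0 [simp]: "Lam L k 0 = 0" by (simp add: Lam_def)


lemma tau_nonend:
  assumes q: "q < 4" and j: "Suc j < len L (T k m)"
  shows "tau L (pos L (T k m) q j) = pos L (T k m) q j"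
proof -
  have jl: "j < len L (T k m)" using j by simp
  have "q = 0 \<or> q = 1 \<or> q = 2 \<or> q = 3" using q by auto
  moreover
  { assume "q = 0" hence ?thesis using sd_R[OF jl] j by (simp add: tau_def) }
  moreover
  { assume "q = 3" hence ?thesis using sd_C[OF jl] j by (simp add: tau_def) }
  moreover
  { assume "q = 1" hence ?thesis using sd_A[OF jl] j by (simp add: tau_def) }
  moreover
  { assume q2: "q = 2"
    have ?thesis
    proof (cases m)
      case 0 thus ?thesis using q2 sd_B0 jl by (simp add: tau_def)
    next
      case (Suc m')
      have "T k (Suc m') - T k m' \<le> j \<Longrightarrow> Suc (j - (T k (Suc m') - T k m')) \<noteq> len L (T k m')"
        using j Suc T_less[of k m'] by (simp add: len_def)
      thus ?thesis using q2 Suc sd_B[of j L k m'] jl by (simp add: tau_def)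
    qed }
  ultimately show ?thesis by blast
qed

lemma phi_ff: "phi L (ff L i) = sX (phi L i)"
proof (cases "i = 0")
  case True
  thus ?thesis using phi_R[of 0 L 0] pos_000[of L] len_pos[of L 0] by (simp add: ff_def sX_def rho_def)
next
  case False
  then obtain k m q j where q: "q < 4" and jl: "j < len L (T k m)" and i: "i = pos L (T k m) q j"
    using cases_pos[of i] by (metis less_one not_le)
  have qc: "q = 0 \<or> q = 1 \<or> q = 2 \<or> q = 3" using q by auto
  show ?thesis
  proof (cases "Suc j < len L (T k m)")
    case True
    have f: "ff L i = pos L (T k m) q (Suc j)" using tau_nonend[OF q True] i by (simp add: ff_def pos_suc1)
    have "q = 0 \<Longrightarrow> ?thesis" using f i phi_R[OF jl] phi_R[OF True] by (simp add: sX_def)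
    moreover have "q = 1 \<Longrightarrow> ?thesis" using f i phi_A[OF jl] phi_A[OF True] by (simp add: sX_def)
    moreover have "q = 2 \<Longrightarrow> ?thesis" using f i phi_B[OF jl] phi_B[OF True] by (simp add: sX_def)
    moreover have "q = 3 \<Longrightarrow> ?thesis" using f i phi_C[OF jl] phi_C[OF True] by (simp add: sX_def)
    ultimately show ?thesis using qc by blast
  next
    case False
    hence je: "j = len L (T k m) - 1" using jl by simp
    define t where "t = T k m"
    have lp: "len L t > 0" by (rule len_pos)
    have le: "len L t - 1 < len L t" using lp by simp
    have e0: "Suc (len L t - 1) = len L t" using lp by simp
    { assume q0: "q = 0"
      have "tau L i = pos L t 3 (len L t - 1)" using i je q0 sd_R[OF le] e0 by (simp add: tau_def t_def)
      hence "ff L i = pos L (Suc t) 0 0" using pos_suc3[of L t] by (simp add: ff_def)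
      hence ?thesis using phi_R[OF le] phi_R[of 0 L "Suc t"] len_pos[of L "Suc t"] i je q0 lp
        by (simp add: sX_def rho_Suc t_def) }
    moreover
    { assume q3: "q = 3"
      have "tau L i = pos L t 0 (len L t - 1)" using i je q3 sd_C[OF le] e0 by (simp add: tau_def t_def)
      hence "ff L i = pos L t 1 0" using pos_suc2[of 0 L t] by (simp add: ff_def)
      hence ?thesis using phi_C[of "len L t - 1" L k m] phi_A[of 0 L k m] lp i je q3
        by (simp add: sX_def t_def) }
    moreover
    { assume q1: "q = 1"
      define t2 where "t2 = T k (Suc m)"
      have tt: "t < t2" using T_less[of k m] by (simp add: t_def t2_def)
      have e: "t2 - t + (len L t - 1) = len L t2 - 1" using tt by (simp add: len_def)
      have "tau L i = pos L t2 2 (len L t2 - 1)" using i je q1 sd_A[of "len L t - 1" L k m] le e e0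
        by (simp add: tau_def t_def t2_def)
      hence "ff L i = pos L t2 3 0" using pos_suc2[of 2 L t2] by (simp add: ff_def)
      hence ?thesis using phi_A[of "len L t - 1" L k m] phi_C[of 0 L k "Suc m"] lp len_pos[of L t2] i je q1
        by (simp add: sX_def t_def t2_def Lam_Suc) }
    moreover
    { assume q2: "q = 2"
      have ?thesis
      proof (cases m)
        case 0
        have "tau L i = i" using i je q2 0 sd_B0[of "len L t - 1" L k] le by (simp add: tau_def t_def)
        hence "ff L i = pos L t 3 0" using pos_suc2[of 2 L t] i je q2 by (simp add: ff_def t_def)
        thus ?thesis using phi_B[of "len L t - 1" L k 0] phi_C[of 0 L k 0] lp i je q2 0
          by (simp add: sX_def t_def)
      next
        case (Suc m')
        define t1 where "t1 = T k m'"
        have tt: "t1 < t" using T_less[of k m'] Suc by (simp add: t_def t1_def)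
        have e: "len L t - 1 - (t - t1) = len L t1 - 1" using tt by (simp add: len_def)
        have e2: "Suc (len L t1 - 1) = len L t1" using len_pos[of L t1] by simp
        have dle: "t - t1 \<le> len L t - 1" by (simp add: len_def)
        have "sd L i = Some (len L t1, len L t1, pos L t1 1 (len L t1 - 1))"
          using i je q2 Suc sd_B[of "len L t - 1" L k m'] le e e2 dle unfolding t_def t1_def by simp
        hence "tau L i = pos L t1 1 (len L t1 - 1)" by (simp add: tau_def)
        hence "ff L i = pos L t1 2 0" using pos_suc2[of 1 L t1] by (simp add: ff_def numeral_2_eq_2)
        thus ?thesis using phi_B[of "len L t - 1" L k m] phi_B[of 0 L k m'] lp len_pos[of L t1] i je q2 Suc
          by (simp add: sX_def t_def t1_def Lam_Suc)
      qed }
    ultimately show ?thesis using qc by blast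
  qed
qed


definition bk :: "nat \<Rightarrow> nat \<Rightarrow> nat" where "bk L k = pos L (T k 0) 3 0"

lemma phi_bk: "phi L (bk L k) = Inr (k, 0)"
  using phi_C[of 0 L k 0] len_pos[of L "T k 0"] by (simp add: bk_def)

lemma phi_Inl0: "phi L i = Inl 0 \<Longrightarrow> i = 0"
proof (rule ccontr)
  assume a: "phi L i = Inl 0" "i \<noteq> 0"
  then obtain k m q j where q: "q < 4" and jl: "j < len L (T k m)" and i: "i = pos L (T k m) q j"
    using cases_pos[of i] by (metis less_one not_le)
  have "q = 0 \<or> q = 1 \<or> q = 2 \<or> q = 3" using q by auto
  thus False using a i phi_R[OF jl] phi_A[OF jl] phi_B[OF jl] phi_C[OF jl] by auto
qed

lemma Lam_pos: "m > 0 \<Longrightarrow> Lam L k m > 0"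
  by (cases m) (auto simp: Lam_Suc len_def)

lemma phi_Inr0: "phi L i = Inr (k, 0) \<Longrightarrow> i = bk L k"
proof -
  assume a: "phi L i = Inr (k, 0)"
  have "i \<noteq> 0" using a by (metis Inl_Inr_False phi_0)
  then obtain k' m q j where q: "q < 4" and jl: "j < len L (T k' m)" and i: "i = pos L (T k' m) q j"
    using cases_pos[of i] by (metis less_one not_le)
  have "q = 0 \<or> q = 1 \<or> q = 2 \<or> q = 3" using q by auto
  moreover have "q \<noteq> 0"
  proof
    assume "q = 0" thus False using a i phi_R[OF jl] by simp
  qed
  moreover have "q \<noteq> 1" using a i phi_A[OF jl] len_pos[of L "T k' m"] by auto
  moreover have "q \<noteq> 2" using a i phi_B[OF jl] jl by auto
  moreover have "q = 3 \<Longrightarrow> i = bk L k"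
  proof -
    assume q3: "q = 3"
    have "k' = k" "2 * Lam L k' m + j = 0" using a i q3 phi_C[OF jl] by auto
    hence "m = 0" "j = 0" using Lam_pos[of m L k'] by auto
    thus ?thesis using i q3 \<open>k' = k\<close> by (simp add: bk_def)
  qed
  ultimately show ?thesis by blast
qed

lemma phi_gg: "x \<ge> 1 \<Longrightarrow> phi L (gg L x) = pX (phi L x)"
  using phi_ff[of L "gg L x"] ff_gg[of x L] by simp

definition psi :: "nat \<Rightarrow> nat + nat \<times> int \<Rightarrow> nat" where
  "psi L y = (case y of Inl a \<Rightarrow> (ff L ^^ a) 0
     | Inr (k, b) \<Rightarrow> if 0 \<le> b then (ff L ^^ nat b) (bk L k) else (gg L ^^ nat (- b)) (bk L k))"

lemma phi_ff_pow: "phi L ((ff L ^^ n) x) = (sX ^^ n) (phi L x)"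
  by (induction n) (auto simp: phi_ff)

lemma sX_pow_Inl: "(sX ^^ n) (Inl a) = Inl (a + n)"
  by (induction n) (auto simp: sX_def)
lemma sX_pow_Inr: "(sX ^^ n) (Inr (k, b)) = Inr (k, b + int n)"
  by (induction n) (auto simp: sX_def)

lemma phi_gg_pow: "phi L ((gg L ^^ n) (bk L k)) = Inr (k, - int n)"
proof (induction n)
  case 0 thus ?case by (simp add: phi_bk)
next
  case (Suc n)
  have "(gg L ^^ n) (bk L k) \<noteq> 0" using Suc by (metis Inl_Inr_False phi_0)
  hence "phi L (gg L ((gg L ^^ n) (bk L k))) = pX (phi L ((gg L ^^ n) (bk L k)))"
    by (intro phi_gg) simp
  thus ?case using Suc by (simp add: pX_def)
qed

lemma phi_psi: "phi L (psi L y) = y"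
proof (cases y)
  case (Inl a) thus ?thesis by (simp add: psi_def phi_ff_pow sX_pow_Inl)
next
  case (Inr kb)
  then obtain k b where y: "y = Inr (k, b)" by (cases kb) auto
  show ?thesis
  proof (cases "0 \<le> b")
    case True thus ?thesis using y by (simp add: psi_def phi_ff_pow phi_bk sX_pow_Inr)
  next
    case False thus ?thesis using y by (simp add: psi_def phi_gg_pow)
  qed
qed

definition mu :: "nat + nat \<times> int \<Rightarrow> nat" where
  "mu y = (case y of Inl a \<Rightarrow> a | Inr (k, b) \<Rightarrow> nat \<bar>b\<bar>)"

lemma psi_phi: "psi L (phi L i) = i"
proof -
  have "\<forall>i. mu (phi L i) = n \<longrightarrow> psi L (phi L i) = i" for n
  proof (induction n rule: less_induct)
    case (less n)
    show ?case
    proof (intro allI impI)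
      fix i assume mi: "mu (phi L i) = n"
      show "psi L (phi L i) = i"
      proof (cases "phi L i")
        case (Inl a)
        show ?thesis
        proof (cases a)
          case 0 thus ?thesis using Inl phi_Inl0[of L i] by (simp add: psi_def)
        next
          case (Suc a')
          have i1: "i \<ge> 1" using Inl Suc by (cases i) auto
          have pg: "phi L (gg L i) = Inl a'" using phi_gg[OF i1, of L] Inl Suc by (simp add: pX_def)
          have "psi L (Inl a') = gg L i" using less[rule_format, of a' "gg L i"] pg mi Inl Suc by (simp add: mu_def)
          hence "psi L (Inl a) = ff L (gg L i)" using Suc by (simp add: psi_def)
          thus ?thesis using Inl ff_gg[OF i1] by simp
        qed
      next
        case (Inr kb)
        then obtain k b where pb: "phi L i = Inr (k, b)" by (cases kb) auto
        consider "b = 0" | "b > 0" | "b < 0" by linarith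
        thus ?thesis
        proof cases
          case 1 thus ?thesis using pb phi_Inr0[of L i k] by (simp add: psi_def)
        next
          case 2
          have i1: "i \<ge> 1" using pb by (cases i) auto
          have pg: "phi L (gg L i) = Inr (k, b - 1)" using phi_gg[OF i1, of L] pb by (simp add: pX_def)
          have "psi L (Inr (k, b - 1)) = gg L i"
            using less[rule_format, of "nat \<bar>b - 1\<bar>" "gg L i"] pg mi pb 2 by (simp add: mu_def)
          hence "(ff L ^^ nat (b - 1)) (bk L k) = gg L i" using 2 by (simp add: psi_def)
          moreover have "nat b = Suc (nat (b - 1))" using 2 by simp
          ultimately have "psi L (Inr (k, b)) = ff L (gg L i)" using 2 by (simp add: psi_def)
          thus ?thesis using pb ff_gg[OF i1] by simp
        next
          case 3
          have pg: "phi L (ff L i) = Inr (k, b + 1)" using phi_ff[of L i] pb by (simp add: sX_def)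
          have "psi L (Inr (k, b + 1)) = ff L i"
            using less[rule_format, of "nat \<bar>b + 1\<bar>" "ff L i"] pg mi pb 3 by (simp add: mu_def)
          moreover have "psi L (Inr (k, b)) = gg L (psi L (Inr (k, b + 1)))"
          proof (cases "b + 1 = 0")
            case True
            hence "b = -1" by simp
            thus ?thesis by (simp add: psi_def)
          next
            case False
            hence "nat (- b) = Suc (nat (- (b + 1)))" using 3 by simp
            thus ?thesis using 3 False by (simp add: psi_def)
          qed
          ultimately show ?thesis using pb by simp
        qed
      qed
    qed
  qed
  thus ?thesis by blast
qed

lemma psi_inj: "inj (psi L)" by (metis injI phi_psi)
lemma phi_inj: "inj (phi L)" by (metis injI psi_phi)

lemma pX_conj: "t \<noteq> Inl 0 \<Longrightarrow> psi L t \<ge> 1 \<and> phi L (gg L (psi L t)) = pX t"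
proof -
  assume t: "t \<noteq> Inl 0"
  have "psi L t \<noteq> 0" using t phi_psi[of L t] by (metis phi_0)
  thus ?thesis using phi_gg[of "psi L t" L] phi_psi[of L t] by simp
qed




lemma norm_1_cis: "cmod (1 - cis a) \<le> \<bar>a\<bar>"
proof -
  have "(cmod (1 - cis a))\<^sup>2 = (1 - cos a)\<^sup>2 + (sin a)\<^sup>2" by (simp add: cmod_power2)
  also have "\<dots> = 2 - 2 * cos a" using sin_cos_squared_add[of a] by (simp add: power2_eq_square algebra_simps)
  also have "cos a = 1 - 2 * sin (a/2) ^ 2" using cos_double_sin[of "a/2"] by simp
  also have "2 - 2 * (1 - 2 * sin (a/2) ^ 2) = 4 * (sin (a/2))\<^sup>2" by simp
  also have "\<dots> \<le> 4 * (a/2)\<^sup>2"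
    using abs_sin_x_le_abs_x[of "a/2"] by (intro mult_left_mono) (auto simp: abs_le_square_iff[symmetric] power2_abs)
  also have "\<dots> = \<bar>a\<bar>\<^sup>2" by (simp add: power2_eq_square)
  finally show ?thesis by (rule power2_le_imp_le) simp
qed

lemma cc_bound: "cmod (cc L i) \<le> pi / (2 * real (Suc L))"
proof (cases "sd L i")
  case None thus ?thesis by (simp add: cc_def)
next
  case (Some a)
  then obtain w s j where a: "sd L i = Some (w, s, j)" by (metis prod_cases3)
  have w: "L < w" using sd_sym[OF a] by simp
  have "cmod (cc L i) = cmod (1 - cis (pi / real w)) / 2" using a by (simp add: cc_def norm_divide)
  also have "\<dots> \<le> \<bar>pi / real w\<bar> / 2" by (intro divide_right_mono norm_1_cis) simp
  also have "\<bar>pi / real w\<bar> = pi / real w" using w by simp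
  also have "pi / real w \<le> pi / real (Suc L)" using w by (intro divide_left_mono) auto
  finally show ?thesis by (simp add: mult.commute)
qed

lemma cc_bound_w: "sd L i = Some (w, s, j) \<Longrightarrow> cmod (cc L i) \<le> pi / (2 * real w)"
proof -
  assume a: "sd L i = Some (w, s, j)"
  have w: "L < w" using sd_sym[OF a] by simp
  have "cmod (cc L i) = cmod (1 - cis (pi / real w)) / 2" using a by (simp add: cc_def norm_divide)
  also have "\<dots> \<le> \<bar>pi / real w\<bar> / 2" by (intro divide_right_mono norm_1_cis) simp
  also have "\<bar>pi / real w\<bar> = pi / real w" using w by simp
  finally show ?thesis by simp
qed

lemma pos_lt_next: "q < 4 \<Longrightarrow> j < len L t \<Longrightarrow> pos L t q j < pos L (Suc t) 0 0"
proof -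
  assume q: "q < 4" and j: "j < len L t"
  have "q * len L t + j < 4 * len L t"
  proof -
    have "q * len L t + j < q * len L t + len L t" using j by simp
    also have "\<dots> = Suc q * len L t" by simp
    also have "\<dots> \<le> 4 * len L t" using q by (intro mult_right_mono) auto
    finally show ?thesis .
  qed
  thus ?thesis by (simp add: pos_def st_Suc)
qed

lemma pos_mono0: "t \<le> t' \<Longrightarrow> pos L t 0 0 \<le> pos L t' 0 0"
  using st_mono'[of t t' L] by (simp add: pos_def)

lemma sd_bound: "sd L i = Some (w, s, j) \<Longrightarrow> i < pos L (2 * w + 2) 0 0"
proof -
  assume a: "sd L i = Some (w, s, j)"
  have "i \<ge> 1" using a by (cases i) auto
  then obtain k m q jj where q: "q < 4" and jj: "jj < len L (T k m)" and i: "i = pos L (T k m) q jj"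
    by (rule cases_pos)
  have "Suc (T k m) \<le> 2 * w + 2"
  proof -
    have "q = 0 \<or> q = 1 \<or> q = 2 \<or> q = 3" using q by auto
    moreover have "q \<noteq> 2 \<Longrightarrow> w = len L (T k m)"
      using a i sd_R[OF jj] sd_A[OF jj] sd_C[OF jj] calculation by auto
    moreover have "q = 2 \<Longrightarrow> Suc (T k m) \<le> 2 * w + 2"
    proof (cases m)
      case 0 thus "q = 2 \<Longrightarrow> ?thesis" using a i sd_B0[OF jj[unfolded 0]] by simp
    next
      case (Suc m')
      assume q2: "q = 2"
      have "w = len L (T k m')" using a i q2 Suc sd_B[of jj L k m'] jj by (auto split: if_splits)
      thus ?thesis using T_Suc_le[of k m'] Suc by (simp add: len_def)
    qed
    ultimately show ?thesis by (auto simp: len_def)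
  qed
  thus ?thesis using pos_lt_next[OF q jj] pos_mono0[of "Suc (T k m)" "2 * w + 2" L] i by simp
qed

lemma cc_finite:
  assumes e: "e > 0"
  shows "finite {i. e \<le> cmod (cc L i)}"
proof -
  define W where "W = nat \<lceil>pi / (2 * e)\<rceil>"
  have "{i. e \<le> cmod (cc L i)} \<subseteq> {..< pos L (2 * W + 2) 0 0}"
  proof
    fix i assume "i \<in> {i. e \<le> cmod (cc L i)}"
    hence ei: "e \<le> cmod (cc L i)" by simp
    then obtain w s j where a: "sd L i = Some (w, s, j)" using e
      by (cases "sd L i") (auto simp: cc_def)
    have wp: "L < w" using sd_sym[OF a] by simp
    have "e \<le> pi / (2 * real w)" using ei cc_bound_w[OF a] by simp
    hence "real w \<le> pi / (2 * e)" using e wp by (simp add: field_simps)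
    hence "w \<le> W" unfolding W_def by linarith
    hence "pos L (2 * w + 2) 0 0 \<le> pos L (2 * W + 2) 0 0" by (intro pos_mono0) simp
    thus "i \<in> {..< pos L (2 * W + 2) 0 0}" using sd_bound[OF a] by simp
  qed
  thus ?thesis by (rule finite_subset) simp
qed




definition SS :: "nat \<Rightarrow> (nat \<Rightarrow> complex) \<Rightarrow> (nat + nat \<times> int \<Rightarrow> complex)" where
  "SS L x = (\<lambda>t. Rop L x (psi L t))"
definition SI :: "nat \<Rightarrow> (nat + nat \<times> int \<Rightarrow> complex) \<Rightarrow> (nat \<Rightarrow> complex)" where
  "SI L y = Rinv L (\<lambda>i. y (phi L i))"

lemma SI_SS: "SI L (SS L x) = x"
  unfolding SI_def SS_def by (simp add: psi_phi Rinv_Rop)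

lemma SS_SI: "SS L (SI L y) = y"
  unfolding SI_def SS_def by (simp add: phi_psi Rop_Rinv)

lemma ptn_inj: "inj (ptn L)" by (metis injI ptn_ptn)
lemma tau_inj: "inj (tau L)" by (metis injI tau_tau)

lemma norm_ca: "cmod z = 1 \<Longrightarrow> cmod (ca z) \<le> 1"
proof -
  assume z: "cmod z = 1"
  have "cmod (1 + z) \<le> 2" using norm_triangle_ineq[of 1 z] z by simp
  thus ?thesis by (simp add: ca_def norm_divide)
qed
lemma norm_cb: "cmod z = 1 \<Longrightarrow> cmod (cb z) \<le> 1"
proof -
  assume z: "cmod z = 1"
  have "cmod (1 - z) \<le> 2" using norm_triangle_ineq4[of 1 z] z by simp
  thus ?thesis by (simp add: cb_def norm_divide)
qed

lemma SS_wc2: "SS L = wc2 (\<lambda>t. ca (zz L (psi L t))) (psi L) (\<lambda>t. cb (zz L (psi L t))) (\<lambda>t. ptn L (psi L t))"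
  by (simp add: SS_def wc2_def Rop_def fun_eq_iff)

lemma SI_wc2: "SI L = wc2 (\<lambda>i. ca (cnj (zz L i))) (phi L) (\<lambda>i. cb (cnj (zz L i))) (\<lambda>i. phi L (ptn L i))"
  by (simp add: SI_def wc2_def Rinv_def fun_eq_iff)

abbreviation XX :: "(nat + nat \<times> int \<Rightarrow> complex) \<Rightarrow> (nat + nat \<times> int \<Rightarrow> complex)" where
  "XX \<equiv> dsum_op ushift (\<lambda>_. bshift)"

lemma XX_eq: "XX y t = (if t = Inl 0 then 0 else y (pX t))"
  by (cases t) (auto simp: dsum_op_def ushift_def bshift_def pX_def)

lemma D_wc2:
  "(\<lambda>y j. XX y j - SS L (ushift (SI L y)) j) =
    wc2 (\<lambda>t. cc L (psi L t)) (\<lambda>t. phi L (tau L (psi L t - 1))) (\<lambda>t. - cc L (psi L t)) (\<lambda>t. phi L (tau L (ptn L (psi L t) - 1)))"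
proof (intro ext)
  fix y t
  show "XX y t - SS L (ushift (SI L y)) t = wc2 (\<lambda>t. cc L (psi L t)) (\<lambda>t. phi L (tau L (psi L t - 1))) (\<lambda>t. - cc L (psi L t)) (\<lambda>t. phi L (tau L (ptn L (psi L t) - 1))) y t"
  proof (cases "t = Inl 0")
    case True
    have "psi L t = 0" using True by (simp add: psi_def)
    thus ?thesis using True by (simp add: XX_eq SS_def Rop_def ushift_def wc2_def)
  next
    case False
    from pX_conj[OF False, of L] have c: "psi L t \<ge> 1" "phi L (gg L (psi L t)) = pX t" by auto
    have "SS L (ushift (SI L y)) t = Rop L (ushift (Rinv L (\<lambda>i. y (phi L i)))) (psi L t)"
      by (simp add: SS_def SI_def)
    also have "\<dots> = y (phi L (tau L (psi L t - 1))) - cc L (psi L t) * (y (phi L (tau L (psi L t - 1))) - y (phi L (tau L (ptn L (psi L t) - 1))))"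
      by (rule key_step[OF c(1)])
    finally show ?thesis using False c by (simp add: XX_eq wc2_def gg_def algebra_simps)
  qed
qed

lemma psi_ge1_of_cc: "cc L (psi L t) \<noteq> 0 \<Longrightarrow> psi L t \<ge> 1"
  by (cases "psi L t") auto

lemma inj_s0: "inj_on (\<lambda>t. phi L (tau L (psi L t - 1))) {t. cc L (psi L t) \<noteq> 0}"
proof (rule inj_onI)
  fix a b assume a: "a \<in> {t. cc L (psi L t) \<noteq> 0}" and b: "b \<in> {t. cc L (psi L t) \<noteq> 0}"
    and e: "phi L (tau L (psi L a - 1)) = phi L (tau L (psi L b - 1))"
  have "tau L (psi L a - 1) = tau L (psi L b - 1)" using e phi_inj by (metis injD)
  hence "psi L a - 1 = psi L b - 1" using tau_inj by (metis injD)
  moreover have "psi L a \<ge> 1" "psi L b \<ge> 1" using a b psi_ge1_of_cc by auto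
  ultimately have "psi L a = psi L b" by simp
  thus "a = b" using psi_inj by (metis injD)
qed

lemma inj_s1: "inj_on (\<lambda>t. phi L (tau L (ptn L (psi L t) - 1))) {t. - cc L (psi L t) \<noteq> 0}"
proof (rule inj_onI)
  fix a b assume a: "a \<in> {t. - cc L (psi L t) \<noteq> 0}" and b: "b \<in> {t. - cc L (psi L t) \<noteq> 0}"
    and e: "phi L (tau L (ptn L (psi L a) - 1)) = phi L (tau L (ptn L (psi L b) - 1))"
  have "tau L (ptn L (psi L a) - 1) = tau L (ptn L (psi L b) - 1)" using e phi_inj by (metis injD)
  hence "ptn L (psi L a) - 1 = ptn L (psi L b) - 1" using tau_inj by (metis injD)
  moreover have "psi L a \<ge> 1" "psi L b \<ge> 1" using a b psi_ge1_of_cc by auto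
  hence "ptn L (psi L a) \<ge> 1" "ptn L (psi L b) \<ge> 1" using ptn_ge1 by auto
  ultimately have "ptn L (psi L a) = ptn L (psi L b)" by simp
  hence "psi L a = psi L b" using ptn_inj by (metis injD)
  thus "a = b" using psi_inj by (metis injD)
qed

lemma inj_SS1: "inj_on (\<lambda>t. ptn L (psi L t)) A"
  using inj_compose[OF ptn_inj psi_inj, of L] by (simp add: inj_on_def)

lemma inj_SI1: "inj_on (\<lambda>i. phi L (ptn L i)) A"
  using inj_compose[OF phi_inj ptn_inj, of L] by (simp add: inj_on_def)


theorem corollary4p2:
  fixes p :: real
  assumes "1 < p"
  shows "approx_similar p ushift (dsum_op ushift (\<lambda>_. bshift))"
proof -
  have p1: "1 \<le> p" using assms by simp
  have cz: "cmod (cnj (zz L i)) = 1" for L i by simp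
  have SSp: "bounded_op p (SS n) \<and> op_norm p (SS n) \<le> 4 * 1 \<and> 0 \<le> op_norm p (SS n)" for n
  proof -
    have a: "cmod (ca (zz n (psi n t))) \<le> 1" "cmod (cb (zz n (psi n t))) \<le> 1" for t
      by (simp_all add: norm_ca norm_cb)
    have b: "inj_on (psi n) {t. ca (zz n (psi n t)) \<noteq> 0}" by (rule inj_on_subset[OF psi_inj]) simp
    show ?thesis unfolding SS_wc2
      using wc2_bounded[OF p1 _ a b inj_SS1] wc2_op_norm[OF p1 _ a b inj_SS1] by simp
  qed
  have SIp: "bounded_op p (SI n) \<and> op_norm p (SI n) \<le> 4 * 1 \<and> 0 \<le> op_norm p (SI n)" for n
  proof -
    have a: "cmod (ca (cnj (zz n i))) \<le> 1" "cmod (cb (cnj (zz n i))) \<le> 1" for i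
      using cz by (simp_all add: norm_ca norm_cb)
    have b: "inj_on (phi n) {i. ca (cnj (zz n i)) \<noteq> 0}" by (rule inj_on_subset[OF phi_inj]) simp
    show ?thesis unfolding SI_wc2
      using wc2_bounded[OF p1 _ a b inj_SI1] wc2_op_norm[OF p1 _ a b inj_SI1] by simp
  qed
  define Mn where "Mn n = pi / (2 * real (Suc n))" for n :: nat
  have Mn0: "0 \<le> Mn n" for n by (simp add: Mn_def)
  have cb1: "cmod (cc n (psi n t)) \<le> Mn n" "cmod (- cc n (psi n t)) \<le> Mn n" for n t
    using cc_bound[of n "psi n t"] by (simp_all add: Mn_def)
  have Dc: "compact_op p (\<lambda>y j. XX y j - SS n (ushift (SI n y)) j)" for n
    unfolding D_wc2
  proof (rule wc2_compact[OF p1 Mn0 cb1 inj_s0 inj_s1])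
    fix e :: real assume e: "e > 0"
    have "{t. e \<le> cmod (cc n (psi n t)) \<or> e \<le> cmod (- cc n (psi n t))} = psi n -` {i. e \<le> cmod (cc n i)}"
      by auto
    moreover have "finite (psi n -` {i. e \<le> cmod (cc n i)})"
      by (rule finite_vimageI[OF cc_finite[OF e] psi_inj])
    ultimately show "finite {t. e \<le> cmod (cc n (psi n t)) \<or> e \<le> cmod (- cc n (psi n t))}" by simp
  qed
  have Dn: "op_norm p (\<lambda>y j. XX y j - SS n (ushift (SI n y)) j) \<le> 4 * Mn n \<and> 0 \<le> op_norm p (\<lambda>y j. XX y j - SS n (ushift (SI n y)) j)" for n
    unfolding D_wc2 using wc2_op_norm[OF p1 Mn0 cb1 inj_s0 inj_s1] by simp
  have lim: "(\<lambda>n. 4 * Mn n) \<longlonglongrightarrow> 0"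
  proof -
    have "(\<lambda>n. (2 * pi) * inverse (real (Suc n))) \<longlonglongrightarrow> (2 * pi) * 0"
      by (intro tendsto_mult tendsto_const LIMSEQ_inverse_real_of_nat)
    moreover have "(\<lambda>n. (2 * pi) * inverse (real (Suc n))) = (\<lambda>n. 4 * Mn n)"
      by (simp add: Mn_def fun_eq_iff field_simps)
    ultimately show ?thesis by (metis mult_zero_right)
  qed
  have conv: "(\<lambda>n. op_norm p (\<lambda>y j. XX y j - SS n (ushift (SI n y)) j)) \<longlonglongrightarrow> 0"
    by (rule tendsto_sandwich[of "\<lambda>_. 0" _ _ "\<lambda>n. 4 * Mn n"]) (use Dn lim in auto)
  have prod: "op_norm p (SS n) * op_norm p (SI n) \<le> 16" for n
  proof -
    have "op_norm p (SS n) * op_norm p (SI n) \<le> 4 * 4"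
      using SSp[of n] SIp[of n] by (intro mult_mono) auto
    thus ?thesis by simp
  qed
  show ?thesis unfolding approx_similar_def
  proof (intro exI[of _ 16] conjI exI[of _ SS] exI[of _ SI] allI)
    fix n
    show "bounded_op p (SS n)" "bounded_op p (SI n)" using SSp SIp by auto
    show "\<forall>x\<in>lp p. SI n (SS n x) = x" by (simp add: SI_SS)
    show "\<forall>y\<in>lp p. SS n (SI n y) = y" by (simp add: SS_SI)
    show "op_norm p (SS n) * op_norm p (SI n) \<le> 16" by (rule prod)
    show "compact_op p (\<lambda>y j. XX y j - SS n (ushift (SI n y)) j)" by (rule Dc)
  qed (use conv in auto)
qed


end
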